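(* Assume $0<\nu<1$, $\mathbf{x}_E(t_0)\neq \mathbf{x}_P(t_0)$, and fix $\delta>0$. Let the pursuer use the feedback law $$\mathbf{v}_P(t)=\frac{\mathbf{z}_P(t)}{\|\mathbf{z}_P(t)\|},\qquad \mathbf{z}_P(t)=\big(R_{\mathcal C}-R_{\mathcal A}(t)\big)\frac{\mathbf{r}(t)}{\|\mathbf{r}(t)\|}+\nu\,\mathbf{y}(t).$$ Then, for every admissible evader control $\mathbf{v}_E(\cdot)$ with $\|\mathbf{v}_E(t)\|\le\nu$: (i) this law is well defined (i.e. $\mathbf{z}_P(t)\neq 0$) up to capture, and $\mathcal A(t)$ is contained in the interior $\mathcal C^\circ$ of $\mathcal C$ for all $t>t_0$ up to capture; (ii) capture ($\mathbf{x}_P(t)=\mathbf{x}_E(t)$) occurs at some finite time $t_{\rm capture}\le t_0+2(1+\nu^{-1})R_{\mathcal C}\ln(R_{\mathcal C}/\delta)$.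
   Context: Setting (simple-motion pursuit–evasion in the plane). An evader and a pursuer have positions $\mathbf{x}_E(t),\mathbf{x}_P(t)\in\mathbb R^2$ with dynamics $\dot{\mathbf{x}}_E=\mathbf{v}_E$, $\dot{\mathbf{x}}_P=\mathbf{v}_P$, where the controls satisfy $\|\mathbf{v}_E\|\le\nu$ and $\|\mathbf{v}_P\|\le 1$ with $0\le\nu<1$. The game starts at time $t_0$ and terminates at capture, i.e. the first time $\mathbf{x}_P=\mathbf{x}_E$. Set $\alpha=1/(1-\nu^2)$, $\gamma=\nu\alpha$, $\beta=\nu^2\alpha$, $\mathbf{r}(t)=\mathbf{x}_E(t)-\mathbf{x}_P(t)$. The Apollonius disc at time $t$ is the closed disc $\mathcal A(t)=\{\mathbf{x}:\|\mathbf{x}-\mathbf{x}_{\mathcal A}(t)\|\le R_{\mathcal A}(t)\}$ with center $\mathbf{x}_{\mathcal A}(t)=\alpha\mathbf{x}_E(t)-\beta\mathbf{x}_P(t)$ and radius $R_{\mathcal A}(t)=\gamma\|\mathbf{r}(t)\|$. Given $\delta>0$, $\mathcal C$ is the fixed closed disc with center $\mathbf{x}_{\mathcal C}=\mathbf{x}_{\mathcal A}(t_0)$ and radius $R_{\mathcal C}=R_{\mathcal A}(t_0)+\delta$, and $\mathbf{y}(t)=\mathbf{x}_{\mathcal A}(t)-\mathbf{x}_{\mathcal C}$. *)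

theory Defs
  imports "HOL-Analysis.Analysis"
begin

text \<open>Apollonius disc of evader position xe and pursuer position xp, speed ratio nu:
  alpha = 1/(1-nu^2), gamma = nu*alpha, beta = nu^2*alpha.\<close>

definition apo_center :: "real \<Rightarrow> real^2 \<Rightarrow> real^2 \<Rightarrow> real^2" where
  "apo_center \<nu> xe xp = (1 / (1 - \<nu>^2)) *\<^sub>R xe - (\<nu>^2 / (1 - \<nu>^2)) *\<^sub>R xp"

definition apo_radius :: "real \<Rightarrow> real^2 \<Rightarrow> real^2 \<Rightarrow> real" where
  "apo_radius \<nu> xe xp = (\<nu> / (1 - \<nu>^2)) * norm (xe - xp)"

definition C_center :: "real \<Rightarrow> real^2 \<Rightarrow> real^2 \<Rightarrow> real^2" where
  "C_center \<nu> xe0 xp0 = apo_center \<nu> xe0 xp0"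

definition C_radius :: "real \<Rightarrow> real \<Rightarrow> real^2 \<Rightarrow> real^2 \<Rightarrow> real" where
  "C_radius \<nu> \<delta> xe0 xp0 = apo_radius \<nu> xe0 xp0 + \<delta>"

definition pursuer_z :: "real \<Rightarrow> real \<Rightarrow> real^2 \<Rightarrow> real^2 \<Rightarrow> real^2 \<Rightarrow> real^2 \<Rightarrow> real^2" where
  "pursuer_z \<nu> \<delta> xe0 xp0 xe xp =
     (C_radius \<nu> \<delta> xe0 xp0 - apo_radius \<nu> xe xp) *\<^sub>R ((1 / norm (xe - xp)) *\<^sub>R (xe - xp))
     + \<nu> *\<^sub>R (apo_center \<nu> xe xp - C_center \<nu> xe0 xp0)"

definition pursuer_v :: "real \<Rightarrow> real \<Rightarrow> real^2 \<Rightarrow> real^2 \<Rightarrow> real^2 \<Rightarrow> real^2 \<Rightarrow> real^2" where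
  "pursuer_v \<nu> \<delta> xe0 xp0 xe xp =
     (1 / norm (pursuer_z \<nu> \<delta> xe0 xp0 xe xp)) *\<^sub>R pursuer_z \<nu> \<delta> xe0 xp0 xe xp"

end

theory Submission
  imports Defs
begin


lemma F_deriv:
  fixes a b xC :: "real^2" and RC \<gamma> \<alpha> \<beta> :: real
  assumes "a \<noteq> b"
  defines "\<rho>0 \<equiv> RC - \<gamma> * norm (a - b)"
  defines "Y \<equiv> \<alpha> *\<^sub>R a - \<beta> *\<^sub>R b - xC"
  defines "W \<equiv> (\<rho>0 * \<gamma>) *\<^sub>R sgn (a - b) + \<alpha> *\<^sub>R Y"
  defines "Z \<equiv> (\<rho>0 * \<gamma>) *\<^sub>R sgn (a - b) + \<beta> *\<^sub>R Y"
  shows "((\<lambda>p. (RC - \<gamma> * norm (fst p - snd p))^2 - (\<alpha> *\<^sub>R fst p - \<beta> *\<^sub>R snd p - xC) \<bullet> (\<alpha> *\<^sub>R fst p - \<beta> *\<^sub>R snd p - xC))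
     has_derivative (\<lambda>h. 2 * (Z \<bullet> snd h) - 2 * (W \<bullet> fst h))) (at (a, b))"
proof -
  have n: "(norm has_derivative (\<lambda>h. h \<bullet> sgn (a - b))) (at (a - b))"
    using has_derivative_norm[of "a - b"] assms(1) by simp
  have d: "((\<lambda>p::(real^2)\<times>(real^2). fst p - snd p) has_derivative (\<lambda>h. fst h - snd h)) (at (a, b))"
    by (auto intro!: derivative_eq_intros)
  have nd: "((\<lambda>p::(real^2)\<times>(real^2). norm (fst p - snd p)) has_derivative (\<lambda>h. (fst h - snd h) \<bullet> sgn (a - b))) (at (a, b))"
    using has_derivative_compose[OF d, of norm] n by simp
  show ?thesis
    apply (rule derivative_eq_intros nd | simp)+
    apply (rule ext)
    apply (simp add: W_def Z_def Y_def \<rho>0_def inner_diff_left inner_diff_right inner_add_left inner_add_right algebra_simps inner_commute)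
    done
qed


lemma dini:
  fixes xE xP :: "real \<Rightarrow> real^2" and F :: "(real^2) \<times> (real^2) \<Rightarrow> real"
    and Z W v :: "real^2" and \<nu> t t0 \<epsilon> :: real
  assumes Fd: "(F has_derivative (\<lambda>h. 2 * (Z \<bullet> snd h) - 2 * (W \<bullet> fst h))) (at (xE t, xP t))"
    and lip: "\<nu>-lipschitz_on {t0..} xE" and tt0: "t0 \<le> t"
    and pd: "(xP has_vector_derivative v) (at t within {t0..})" and nv: "norm v \<le> 1"
    and ep: "\<epsilon> > 0"
  shows "\<exists>\<eta>>0. \<forall>s. t < s \<and> s < t + \<eta> \<longrightarrow>
     F (xE s, xP s) - F (xE t, xP t) \<ge> (s - t) * (2 * (Z \<bullet> v) - 2 * \<nu> * norm W - \<epsilon>)"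
proof -
  have nu0: "0 \<le> \<nu>" using lipschitz_on_nonneg[OF lip] .
  define M where "M = \<nu> + 2"
  have M0: "M > 0" using nu0 by (simp add: M_def)
  define e2 where "e2 = min 1 (\<epsilon> / (4 * (norm Z + 1)))"
  have e20: "e2 > 0" using ep by (simp add: e2_def add_pos_nonneg, smt (verit) divide_pos_pos norm_ge_zero)
  have ep4: "0 \<le> \<epsilon> / (4 * (norm Z + 1))" using ep by (smt (verit) divide_nonneg_pos norm_ge_zero)
  define e1 where "e1 = \<epsilon> / (2 * M)"
  have e10: "e1 > 0" using ep M0 by (simp add: e1_def)
  from pd have "(xP has_derivative (\<lambda>h. h *\<^sub>R v)) (at t within {t0..})"
    by (simp add: has_vector_derivative_def)
  then obtain d2 where d2: "d2 > 0" and
    D2: "\<And>y. y \<in> {t0..} \<Longrightarrow> norm (y - t) < d2 \<Longrightarrow> norm (xP y - xP t - (y - t) *\<^sub>R v) \<le> e2 * norm (y - t)"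
    using e20 unfolding has_derivative_within_alt by blast
  from Fd obtain d1 where d1: "d1 > 0" and
    D1: "\<And>y. norm (y - (xE t, xP t)) < d1 \<Longrightarrow>
       norm (F y - F (xE t, xP t) - (2 * (Z \<bullet> snd (y - (xE t, xP t))) - 2 * (W \<bullet> fst (y - (xE t, xP t))))) \<le> e1 * norm (y - (xE t, xP t))"
    using e10 unfolding has_derivative_at_alt by blast
  define \<eta> where "\<eta> = min d2 (d1 / M)"
  have "\<eta> > 0" using d1 d2 M0 by (simp add: \<eta>_def)
  moreover have "F (xE s, xP s) - F (xE t, xP t) \<ge> (s - t) * (2 * (Z \<bullet> v) - 2 * \<nu> * norm W - \<epsilon>)"
    if s: "t < s" "s < t + \<eta>" for s
  proof -
    define \<tau> where "\<tau> = s - t"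
    have tau0: "\<tau> > 0" using s by (simp add: \<tau>_def)
    have sin: "s \<in> {t0..}" using s tt0 by simp
    have tlt1: "\<tau> < d2" using s by (auto simp: \<tau>_def \<eta>_def)
    have "\<tau> < d1 / M" using s by (auto simp: \<tau>_def \<eta>_def)
    then have "\<tau> * M < d1" using M0 by (simp add: pos_less_divide_eq)
    note tlt = tlt1 this
    define dE where "dE = xE s - xE t"
    define dP where "dP = xP s - xP t"
    define q where "q = dP - \<tau> *\<^sub>R v"
    have nE: "norm dE \<le> \<nu> * \<tau>"
      using lipschitz_on_normD[OF lip sin, of t] tt0 tau0 by (simp add: dE_def \<tau>_def)
    have nq: "norm q \<le> e2 * \<tau>"
      using D2[OF sin] tlt tau0 by (simp add: q_def dP_def \<tau>_def)
    have "norm dP \<le> norm (\<tau> *\<^sub>R v) + norm q" unfolding q_def using norm_triangle_ineq[of "\<tau> *\<^sub>R v" "dP - \<tau> *\<^sub>R v"] by simp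
    also have "\<dots> \<le> \<tau> + \<tau>"
    proof -
      have "norm (\<tau> *\<^sub>R v) \<le> \<tau>" using nv tau0 by (simp add: mult_left_le)
      moreover have "e2 * \<tau> \<le> \<tau>" using tau0 by (simp add: e2_def)
      ultimately show ?thesis using nq by linarith
    qed
    finally have nP: "norm dP \<le> 2 * \<tau>" by simp
    have nD: "norm (dE, dP) \<le> \<tau> * M"
      using norm_Pair_le[of dE dP] nE nP by (simp add: M_def algebra_simps)
    have eqy: "(xE s, xP s) - (xE t, xP t) = (dE, dP)" by (simp add: dE_def dP_def)
    have R: "norm (F (xE s, xP s) - F (xE t, xP t) - (2 * (Z \<bullet> dP) - 2 * (W \<bullet> dE))) \<le> e1 * norm (dE, dP)"
      using D1[of "(xE s, xP s)"] nD tlt unfolding eqy by simp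
    have R2: "e1 * norm (dE, dP) \<le> \<tau> * \<epsilon> / 2"
    proof -
      have "e1 * norm (dE, dP) \<le> e1 * (\<tau> * M)" using nD e10 by (simp add: mult_left_mono)
      also have "\<dots> = \<tau> * \<epsilon> / 2" using M0 by (simp add: e1_def field_simps)
      finally show ?thesis .
    qed
    have Wb: "W \<bullet> dE \<le> norm W * (\<nu> * \<tau>)"
      using norm_cauchy_schwarz[of W dE] mult_left_mono[OF nE norm_ge_zero[of W]] by linarith
    have Zq: "\<bar>Z \<bullet> q\<bar> \<le> norm Z * (e2 * \<tau>)"
      using Cauchy_Schwarz_ineq2[of Z q] mult_left_mono[OF nq norm_ge_zero[of Z]] by linarith
    have Zq2: "norm Z * (e2 * \<tau>) \<le> \<tau> * \<epsilon> / 4"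
    proof -
      have "norm Z * e2 \<le> \<epsilon> / 4"
      proof -
        have "norm Z * e2 \<le> (norm Z + 1) * (\<epsilon> / (4 * (norm Z + 1)))"
          by (rule mult_mono) (use ep4 e20 in \<open>auto simp: e2_def simp del: distrib_left distrib_right\<close>)
        also have "\<dots> = \<epsilon> / 4"
        proof -
          have "norm Z + 1 > 0" using norm_ge_zero[of Z] by linarith
          then show ?thesis by (simp add: field_simps)
        qed
        finally show ?thesis .
      qed
      then have "norm Z * e2 * \<tau> \<le> \<epsilon> / 4 * \<tau>" using tau0 by (intro mult_right_mono) auto
      then show ?thesis by (simp add: algebra_simps)
    qed
    have dPe: "Z \<bullet> dP = \<tau> * (Z \<bullet> v) + Z \<bullet> q" by (simp add: q_def inner_diff_right)
    have R3: "- (e1 * norm (dE, dP)) \<le> F (xE s, xP s) - F (xE t, xP t) - (2 * (Z \<bullet> dP) - 2 * (W \<bullet> dE))"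
      using R by (simp only: real_norm_def abs_le_iff) linarith
    have Zq3: "- (\<tau> * \<epsilon> / 4) \<le> Z \<bullet> q" using Zq Zq2 by linarith
    have "(s - t) * (2 * (Z \<bullet> v) - 2 * \<nu> * norm W - \<epsilon>) = 2 * (\<tau> * (Z \<bullet> v)) - 2 * (norm W * (\<nu> * \<tau>)) - \<tau> * \<epsilon>"
      by (simp add: \<tau>_def algebra_simps)
    also have "\<dots> \<le> F (xE s, xP s) - F (xE t, xP t)"
      using R3 R2 dPe Wb Zq3 by linarith
    finally show ?thesis .
  qed
  ultimately show ?thesis by blast
qed


lemma key_alg:
  fixes u Y :: "real^2" and \<nu> \<rho>0 RC :: real
  assumes nu: "0 < \<nu>" "\<nu> < 1" and nu1: "norm u = 1" and r0: "0 < \<rho>0" "\<rho>0 < RC" and nY: "norm Y < \<rho>0"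
  shows "\<rho>0 *\<^sub>R u + \<nu> *\<^sub>R Y \<noteq> 0"
    and "2 * (\<nu> / (1 - \<nu>^2) * norm (\<rho>0 *\<^sub>R u + \<nu> *\<^sub>R Y)
           - \<nu> * norm ((\<rho>0 * (\<nu> / (1 - \<nu>^2))) *\<^sub>R u + (1 / (1 - \<nu>^2)) *\<^sub>R Y))
         > \<nu> / ((1 + \<nu>) * RC) * (\<rho>0^2 - (norm Y)^2)"
proof -
  define d where "d = 1 - \<nu>^2"
  have d0: "d > 0" proof -
    have "\<nu> * \<nu> < 1 * 1" using nu by (intro mult_strict_mono) auto
    then show ?thesis by (simp add: d_def power2_eq_square)
  qed
  define z where "z = \<rho>0 *\<^sub>R u + \<nu> *\<^sub>R Y"
  define w where "w = (\<nu> * \<rho>0) *\<^sub>R u + Y"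
  define g where "g = \<rho>0^2 - (norm Y)^2"
  have g0: "g > 0" using nY r0 norm_ge_zero[of Y] by (simp add: g_def power_strict_mono)
  have uu: "u \<bullet> u = 1" using nu1 by (simp add: power2_norm_eq_inner[symmetric])
  have zz: "(norm z)^2 = \<rho>0^2 + 2 * \<rho>0 * \<nu> * (u \<bullet> Y) + \<nu>^2 * (norm Y)^2"
    by (simp only: z_def power2_norm_eq_inner) (simp add: inner_add_left inner_add_right uu inner_commute algebra_simps power2_eq_square)
  have ww: "(norm w)^2 = \<nu>^2 * \<rho>0^2 + 2 * \<rho>0 * \<nu> * (u \<bullet> Y) + (norm Y)^2"
    by (simp only: w_def power2_norm_eq_inner) (simp add: inner_add_left inner_add_right uu inner_commute algebra_simps power2_eq_square)
  have diff: "(norm z)^2 - (norm w)^2 = d * g"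
    unfolding zz ww d_def g_def by (simp add: algebra_simps)
  have zpos: "(norm z)^2 > 0" using diff d0 g0 norm_ge_zero[of w]
    by (smt (verit) mult_pos_pos zero_le_power2)
  then show "\<rho>0 *\<^sub>R u + \<nu> *\<^sub>R Y \<noteq> 0" by (auto simp: z_def)
  have Wd: "(\<rho>0 * (\<nu> / (1 - \<nu>^2))) *\<^sub>R u + (1 / (1 - \<nu>^2)) *\<^sub>R Y = (1/d) *\<^sub>R w"
    by (simp add: w_def d_def scaleR_add_right)
  have nW: "norm ((\<rho>0 * (\<nu> / (1 - \<nu>^2))) *\<^sub>R u + (1 / (1 - \<nu>^2)) *\<^sub>R Y) = norm w / d"
    unfolding Wd using d0 by simp
  define S where "S = norm z + norm w"
  have S1: "(norm z - norm w) * S = d * g" using diff by (simp add: S_def power2_eq_square algebra_simps)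
  have Sp: "S > 0"
  proof -
    have "S \<ge> 0" by (simp add: S_def)
    moreover have "S \<noteq> 0" using S1 d0 g0 by auto
    ultimately show ?thesis by simp
  qed
  have nz: "norm z \<le> \<rho>0 + \<nu> * norm Y"
    unfolding z_def using norm_triangle_ineq[of "\<rho>0 *\<^sub>R u" "\<nu> *\<^sub>R Y"] nu r0 nu1 by simp
  have nw: "norm w \<le> \<nu> * \<rho>0 + norm Y"
    unfolding w_def using norm_triangle_ineq[of "(\<nu> * \<rho>0) *\<^sub>R u" Y] nu r0 nu1 by simp
  have Sb: "S < 2 * (1 + \<nu>) * RC"
  proof -
    have "S \<le> (1 + \<nu>) * (\<rho>0 + norm Y)" using nz nw by (simp add: S_def algebra_simps)
    also have "\<dots> < (1 + \<nu>) * (2 * RC)" using nY r0 nu by (intro mult_strict_left_mono) auto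
    finally show ?thesis by (simp add: algebra_simps)
  qed
  have lhs: "2 * (\<nu> / (1 - \<nu>^2) * norm z - \<nu> * (norm w / d)) = 2 * \<nu> * g / S"
  proof -
    have "2 * (\<nu> / (1 - \<nu>^2) * norm z - \<nu> * (norm w / d)) = 2 * \<nu> / d * (norm z - norm w)"
      using d0 unfolding d_def[symmetric] by (simp add: field_simps)
    also have "\<dots> = 2 * \<nu> / d * (d * g / S)"
    proof -
      have "norm z - norm w = d * g / S" using S1 Sp by (simp add: eq_divide_eq)
      then show ?thesis by simp
    qed
    also have "\<dots> = 2 * \<nu> * g / S" using d0 by simp
    finally show ?thesis .
  qed
  have "\<nu> / ((1 + \<nu>) * RC) * g = 2 * \<nu> * g / (2 * (1 + \<nu>) * RC)"
    by (metis (no_types, lifting) divide_divide_eq_left' mult.assoc nonzero_mult_divide_mult_cancel_left times_divide_eq_left zero_neq_numeral)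
  also have "\<dots> < 2 * \<nu> * g / S"
    using Sp Sb nu g0 by (intro divide_strict_left_mono) auto
  finally show "2 * (\<nu> / (1 - \<nu>^2) * norm (\<rho>0 *\<^sub>R u + \<nu> *\<^sub>R Y)
           - \<nu> * norm ((\<rho>0 * (\<nu> / (1 - \<nu>^2))) *\<^sub>R u + (1 / (1 - \<nu>^2)) *\<^sub>R Y))
         > \<nu> / ((1 + \<nu>) * RC) * (\<rho>0^2 - (norm Y)^2)"
    using lhs unfolding nW z_def[symmetric] g_def by simp
qed


lemma sup_arg:
  fixes G H P :: "real \<Rightarrow> real" and t0 T :: real
  assumes tT: "t0 \<le> T" and cG: "continuous_on {t0..T} G" and cH: "continuous_on {t0..T} H"
    and cP: "continuous_on {t0..T} P" and i1: "G t0 \<ge> H t0" and i2: "P t0 > 0"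
    and pos: "\<And>s. s \<in> {t0..T} \<Longrightarrow> G s \<ge> H s \<Longrightarrow> P s \<ge> 0 \<Longrightarrow> P s > 0"
    and loc: "\<And>t. t \<in> {t0..<T} \<Longrightarrow> (\<forall>s\<in>{t0..t}. G s \<ge> H s \<and> P s > 0) \<Longrightarrow>
        \<exists>\<eta>>0. \<forall>s. t < s \<and> s < t + \<eta> \<longrightarrow> G s - H s > G t - H t"
  shows "\<forall>s\<in>{t0..T}. G s \<ge> H s \<and> P s > 0"
proof -
  define A where "A = {t\<in>{t0..T}. \<forall>s\<in>{t0..t}. G s \<ge> H s \<and> P s > 0}"
  have t0A: "t0 \<in> A" using i1 i2 tT by (auto simp: A_def)
  have bdd: "bdd_above A" by (auto simp: A_def bdd_above_def)
  define m where "m = Sup A"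
  have m1: "t0 \<le> m" unfolding m_def using cSup_upper[OF t0A bdd] .
  have m2: "m \<le> T" unfolding m_def using t0A by (intro cSup_least) (auto simp: A_def)
  have left: "G s \<ge> H s \<and> P s > 0" if "s \<in> {t0..<m}" for s
  proof -
    from that have "s < Sup A" by (simp add: m_def)
    then obtain a where "a \<in> A" "s < a" using less_cSupD[of A s] t0A by blast
    then show ?thesis using that by (auto simp: A_def)
  qed
  have atm: "G m \<ge> H m \<and> P m > 0"
  proof (cases "m = t0")
    case True then show ?thesis using i1 i2 by simp
  next
    case False
    then have lt: "t0 < m" using m1 by simp
    have cl: "closure {t0..<m} = {t0..m}" using lt by simp
    have sub: "{t0..m} \<subseteq> {t0..T}" using m2 by auto
    have c1: "continuous_on (closure {t0..<m}) (\<lambda>x. G x - H x)"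
      unfolding cl by (intro continuous_on_diff continuous_on_subset[OF cG sub] continuous_on_subset[OF cH sub])
    have c2: "continuous_on (closure {t0..<m}) P"
      unfolding cl by (rule continuous_on_subset[OF cP sub])
    have mc: "m \<in> closure {t0..<m}" unfolding cl using lt by simp
    have "(\<lambda>x. G x - H x) m \<ge> 0"
      by (rule continuous_ge_on_closure[OF c1 mc]) (use left in simp)
    moreover have "P m \<ge> 0"
      by (rule continuous_ge_on_closure[OF c2 mc]) (use left in \<open>simp add: less_imp_le\<close>)
    ultimately show ?thesis using pos[of m] m1 m2 by auto
  qed
  have allm: "\<forall>s\<in>{t0..m}. G s \<ge> H s \<and> P s > 0"
  proof
    fix s assume "s \<in> {t0..m}"
    then have "s \<in> {t0..<m} \<or> s = m" by auto
    then show "G s \<ge> H s \<and> P s > 0" using left atm by blast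
  qed
  have "m = T"
  proof (rule ccontr)
    assume "m \<noteq> T"
    then have mT: "m < T" using m2 by simp
    obtain \<eta> where e0: "\<eta> > 0" and e: "\<And>s. m < s \<Longrightarrow> s < m + \<eta> \<Longrightarrow> G s - H s > G m - H m"
      using loc[of m] mT m1 allm by auto
    have "m \<in> {t0..T}" using m1 m2 by simp
    then obtain \<eta>2 where e2: "\<eta>2 > 0" and e2': "\<And>s. s \<in> {t0..T} \<Longrightarrow> dist s m < \<eta>2 \<Longrightarrow> dist (P s) (P m) < P m"
      using cP atm unfolding continuous_on_iff by blast
    define s1 where "s1 = m + min \<eta> (min \<eta>2 (T - m)) / 2"
    have s1m: "m < s1" using e0 e2 mT by (simp add: s1_def)
    have mm: "min \<eta> (min \<eta>2 (T - m)) \<le> \<eta>" "min \<eta> (min \<eta>2 (T - m)) \<le> \<eta>2" "min \<eta> (min \<eta>2 (T - m)) \<le> T - m"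
      by auto
    have s1b: "s1 < m + \<eta>" "s1 < m + \<eta>2" "s1 \<le> T" using e0 e2 mT mm by (auto simp: s1_def)
    have "s1 \<in> A"
      unfolding A_def
    proof (rule CollectI, rule conjI)
      show "s1 \<in> {t0..T}" using s1m s1b m1 by simp
      show "\<forall>s\<in>{t0..s1}. G s \<ge> H s \<and> P s > 0"
      proof
      fix s assume s: "s \<in> {t0..s1}"
      show "G s \<ge> H s \<and> P s > 0"
      proof (cases "s \<le> m")
        case True then show ?thesis using allm s by simp
      next
        case False
        then have "G s - H s > G m - H m" using e s s1b by simp
        then have g: "G s \<ge> H s" using atm by simp
        have "dist (P s) (P m) < P m" using e2'[of s] s s1b False m1 by (auto simp: dist_real_def)
        then show ?thesis using g by (auto simp: dist_real_def)
      qed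
      qed
    qed
    then have "s1 \<le> m" unfolding m_def using bdd by (rule cSup_upper)
    then show False using s1m by simp
  qed
  then show ?thesis using allm by simp
qed

theorem theorem1:
  fixes \<nu> \<delta> t0 :: real and xE xP :: "real \<Rightarrow> real^2"
  assumes nu_pos: "0 < \<nu>" and nu_lt1: "\<nu> < 1"
    and delta_pos: "0 < \<delta>"
    and init_distinct: "xE t0 \<noteq> xP t0"
    and evader: "\<nu>-lipschitz_on {t0..} xE"
    and pursuer: "\<And>t. t0 \<le> t \<Longrightarrow> (\<forall>s\<in>{t0..t}. xP s \<noteq> xE s) \<Longrightarrow>
        (xP has_vector_derivative pursuer_v \<nu> \<delta> (xE t0) (xP t0) (xE t) (xP t)) (at t within {t0..})"
  shows "\<exists>tc. t0 < tc
     \<and> tc \<le> t0 + 2 * (1 + 1 / \<nu>) * C_radius \<nu> \<delta> (xE t0) (xP t0)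
              * ln (C_radius \<nu> \<delta> (xE t0) (xP t0) / \<delta>)
     \<and> xP tc = xE tc
     \<and> (\<forall>t\<in>{t0..<tc}. xP t \<noteq> xE t \<and> pursuer_z \<nu> \<delta> (xE t0) (xP t0) (xE t) (xP t) \<noteq> 0)
     \<and> (\<forall>t\<in>{t0<..<tc}. cball (apo_center \<nu> (xE t) (xP t)) (apo_radius \<nu> (xE t) (xP t))
            \<subseteq> interior (cball (C_center \<nu> (xE t0) (xP t0)) (C_radius \<nu> \<delta> (xE t0) (xP t0))))"
proof -
  define RC where "RC = C_radius \<nu> \<delta> (xE t0) (xP t0)"
  define xC where "xC = C_center \<nu> (xE t0) (xP t0)"
  define \<gamma> where "\<gamma> = \<nu> / (1 - \<nu>^2)"
  define \<alpha> where "\<alpha> = 1 / (1 - \<nu>^2)"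
  define \<beta> where "\<beta> = \<nu>^2 / (1 - \<nu>^2)"
  have d0: "1 - \<nu>^2 > 0"
  proof -
    have "\<nu> * \<nu> < 1 * 1" using nu_pos nu_lt1 by (intro mult_strict_mono) auto
    then show ?thesis by (simp add: power2_eq_square)
  qed
  have g0: "\<gamma> > 0" using d0 nu_pos by (simp add: \<gamma>_def)
  have bg: "\<beta> = \<gamma> * \<nu>" by (simp add: \<beta>_def \<gamma>_def power2_eq_square)
  define F where "F = (\<lambda>p::(real^2)\<times>(real^2). (RC - \<gamma> * norm (fst p - snd p))^2 - (\<alpha> *\<^sub>R fst p - \<beta> *\<^sub>R snd p - xC) \<bullet> (\<alpha> *\<^sub>R fst p - \<beta> *\<^sub>R snd p - xC))"
  define \<rho> where "\<rho> = (\<lambda>s. RC - \<gamma> * norm (xE s - xP s))"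
  define Yv where "Yv = (\<lambda>s. \<alpha> *\<^sub>R xE s - \<beta> *\<^sub>R xP s - xC)"
  define g where "g = (\<lambda>s. F (xE s, xP s))"
  have g_eq: "g s = (\<rho> s)^2 - (norm (Yv s))^2" for s
    by (simp add: g_def F_def \<rho>_def Yv_def power2_norm_eq_inner)
  have rad: "apo_radius \<nu> a b = \<gamma> * norm (a - b)" for a b
    by (simp add: apo_radius_def \<gamma>_def)
  have cen: "apo_center \<nu> (xE s) (xP s) - xC = Yv s" for s
    by (simp add: apo_center_def Yv_def \<alpha>_def \<beta>_def)
  have zP: "pursuer_z \<nu> \<delta> (xE t0) (xP t0) (xE s) (xP s) = \<rho> s *\<^sub>R sgn (xE s - xP s) + \<nu> *\<^sub>R Yv s" for s
    unfolding pursuer_z_def RC_def[symmetric] xC_def[symmetric] cen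
    by (simp add: \<rho>_def rad sgn_div_norm inverse_eq_divide RC_def)
  have RCdef: "RC = \<gamma> * norm (xE t0 - xP t0) + \<delta>"
    by (simp add: RC_def C_radius_def rad)
  have r00: "norm (xE t0 - xP t0) > 0" using init_distinct by simp
  have RCgt: "RC > \<delta>" using RCdef g0 r00 by simp
  define k where "k = \<nu> / ((1 + \<nu>) * RC)"
  define h where "h = (\<lambda>s. \<delta>^2 * exp (k * (s - t0)))"
  have hpos: "h s > 0" for s using delta_pos by (simp add: h_def)
  have rho0: "\<rho> t0 = \<delta>" by (simp add: \<rho>_def RCdef)
  have Y0: "Yv t0 = 0"
    using cen[of t0] by (simp add: xC_def C_center_def)
  have gt0: "g t0 = h t0" by (simp add: g_eq rho0 Y0 h_def)
  define nocap where "nocap = (\<lambda>T. \<forall>s\<in>{t0..T}. xP s \<noteq> xE s)"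
  have ncD: "xE s \<noteq> xP s" if "nocap T" "t0 \<le> s" "s \<le> T" for T s
    using that unfolding nocap_def by (metis atLeastAtMost_iff)
  have contE: "continuous_on {t0..} xE" using lipschitz_on_continuous_on[OF evader] .
  have contP: "continuous_on {t0..T} xP" if "nocap T" for T
    unfolding continuous_on_eq_continuous_within
  proof
    fix x assume x: "x \<in> {t0..T}"
    have "nocap x" using that x by (auto simp: nocap_def)
    then have "continuous (at x within {t0..}) xP"
      using pursuer[of x] x by (intro has_vector_derivative_continuous) (auto simp: nocap_def)
    then show "continuous (at x within {t0..T}) xP" by (rule continuous_within_subset) auto
  qed
  have basic: "norm (Yv t) < \<rho> t \<and> \<rho> t < RC"
    if "g t \<ge> h t" "\<rho> t > 0" "xE t \<noteq> xP t" for t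
  proof
    have "(norm (Yv t))^2 < (\<rho> t)^2" using that hpos[of t] g_eq[of t] by linarith
    then show "norm (Yv t) < \<rho> t" using that(2) by (simp add: power_less_imp_less_base)
    show "\<rho> t < RC" using that(3) g0 by (simp add: \<rho>_def)
  qed
  have local: "\<exists>\<eta>>0. \<forall>s. t < s \<and> s < t + \<eta> \<longrightarrow> g s - h s > g t - h t"
    if tt0: "t0 \<le> t" and nc: "nocap t" and gh: "g t \<ge> h t" and rp: "\<rho> t > 0" for t
  proof -
    have rne: "xE t \<noteq> xP t" using ncD[OF nc tt0] by simp
    define u where "u = sgn (xE t - xP t)"
    have nu1: "norm u = 1" using rne by (simp add: u_def norm_sgn)
    define z where "z = \<rho> t *\<^sub>R u + \<nu> *\<^sub>R Yv t"
    define W where "W = (\<rho> t * \<gamma>) *\<^sub>R u + \<alpha> *\<^sub>R Yv t"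
    define Z where "Z = (\<rho> t * \<gamma>) *\<^sub>R u + \<beta> *\<^sub>R Yv t"
    have bas: "norm (Yv t) < \<rho> t" "\<rho> t < RC" using basic[OF gh rp rne] by auto
    have ka1: "z \<noteq> 0" using key_alg(1)[OF nu_pos nu_lt1 nu1 rp bas(2) bas(1)] by (simp add: z_def)
    have ka2: "2 * (\<gamma> * norm z - \<nu> * norm W) > k * g t"
      using key_alg(2)[OF nu_pos nu_lt1 nu1 rp bas(2) bas(1)]
      by (simp add: z_def W_def \<gamma>_def \<alpha>_def k_def g_eq)
    define v where "v = pursuer_v \<nu> \<delta> (xE t0) (xP t0) (xE t) (xP t)"
    have v_eq: "v = (1 / norm z) *\<^sub>R z" by (simp add: v_def pursuer_v_def zP z_def u_def)
    have nv: "norm v \<le> 1" using ka1 by (simp add: v_eq)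
    have ZZ: "Z = \<gamma> *\<^sub>R z" by (simp add: Z_def z_def bg scaleR_add_right)
    have Zv: "Z \<bullet> v = \<gamma> * norm z"
      using ka1 by (simp add: ZZ v_eq power2_norm_eq_inner[symmetric] power2_eq_square)
    have Fd: "(F has_derivative (\<lambda>h. 2 * (Z \<bullet> snd h) - 2 * (W \<bullet> fst h))) (at (xE t, xP t))"
      using F_deriv[OF rne, of RC \<gamma> \<alpha> \<beta> xC]
      unfolding F_def Z_def W_def u_def Yv_def \<rho>_def by simp
    have pd: "(xP has_vector_derivative v) (at t within {t0..})"
      unfolding v_def using pursuer[OF tt0] nc by (simp add: nocap_def)
    define D where "D = 2 * (\<gamma> * norm z - \<nu> * norm W)"
    have k0: "k \<ge> 0" using nu_pos RCgt delta_pos by (simp add: k_def)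
    have khle: "k * h t \<le> k * g t" using mult_left_mono[OF gh k0] .
    define \<epsilon> where "\<epsilon> = (D - k * h t) / 2"
    have ep: "\<epsilon> > 0" using ka2 khle by (simp add: \<epsilon>_def D_def)
    obtain \<eta>1 where e1: "\<eta>1 > 0" and E1: "\<And>s. t < s \<and> s < t + \<eta>1 \<Longrightarrow>
        F (xE s, xP s) - F (xE t, xP t) \<ge> (s - t) * (2 * (Z \<bullet> v) - 2 * \<nu> * norm W - \<epsilon>)"
      using dini[OF Fd evader tt0 pd nv ep] by blast
    have hd: "(h has_derivative (\<lambda>x. x * (k * h t))) (at t)"
      unfolding h_def by (auto intro!: derivative_eq_intros)
    have ep2: "\<epsilon> / 2 > 0" using ep by simp
    obtain d3 where d3: "d3 > 0" and D3: "\<And>y. norm (y - t) < d3 \<Longrightarrow>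
        norm (h y - h t - (y - t) * (k * h t)) \<le> \<epsilon> / 2 * norm (y - t)"
      using hd ep2 unfolding has_derivative_at_alt by blast
    define \<eta> where "\<eta> = min \<eta>1 d3"
    have "\<eta> > 0" using e1 d3 by (simp add: \<eta>_def)
    moreover have "g s - h s > g t - h t" if s: "t < s" "s < t + \<eta>" for s
    proof -
      have A: "g s - g t \<ge> (s - t) * (D - \<epsilon>)"
        using E1[of s] s by (simp add: g_def \<eta>_def Zv D_def algebra_simps)
      have "norm (h s - h t - (s - t) * (k * h t)) \<le> \<epsilon> / 2 * (s - t)"
        using D3[of s] s by (simp add: \<eta>_def)
      then have B: "h s - h t \<le> (s - t) * (k * h t) + \<epsilon> / 2 * (s - t)"
        by (simp only: real_norm_def abs_le_iff) linarith
      have "(s - t) * (D - \<epsilon>) - ((s - t) * (k * h t) + \<epsilon> / 2 * (s - t)) = (s - t) * (\<epsilon> / 2)"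
        by (simp add: \<epsilon>_def algebra_simps)
      moreover have "(s - t) * (\<epsilon> / 2) > 0" using s ep by simp
      ultimately show ?thesis using A B by linarith
    qed
    ultimately show ?thesis by blast
  qed
  have contg: "continuous_on {t0..T} g" "continuous_on {t0..T} \<rho>" if "nocap T" for T
  proof -
    have cE: "continuous_on {t0..T} xE" by (rule continuous_on_subset[OF contE]) auto
    have cP: "continuous_on {t0..T} xP" using contP[OF that] .
    show "continuous_on {t0..T} g" unfolding g_def F_def
      by (auto intro!: continuous_intros cE cP)
    show "continuous_on {t0..T} \<rho>" unfolding \<rho>_def
      by (auto intro!: continuous_intros cE cP)
  qed
  have invariant: "\<forall>s\<in>{t0..T}. g s \<ge> h s \<and> \<rho> s > 0" if tT: "t0 \<le> T" and nc: "nocap T" for T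
  proof (rule sup_arg[OF tT contg(1)[OF nc] _ contg(2)[OF nc]])
    show "continuous_on {t0..T} h" unfolding h_def by (auto intro!: continuous_intros)
    show "g t0 \<ge> h t0" using gt0 by simp
    show "\<rho> t0 > 0" using rho0 delta_pos by simp
    show "\<rho> s > 0" if "s \<in> {t0..T}" "g s \<ge> h s" "\<rho> s \<ge> 0" for s
    proof -
      have "(\<rho> s)^2 > 0" using that(2) hpos[of s] g_eq[of s] zero_le_power2[of "norm (Yv s)"] by linarith
      then show ?thesis using that(3) by (cases "\<rho> s = 0") auto
    qed
    show "\<exists>\<eta>>0. \<forall>s. t < s \<and> s < t + \<eta> \<longrightarrow> g s - h s > g t - h t"
      if "t \<in> {t0..<T}" "\<forall>s\<in>{t0..t}. g s \<ge> h s \<and> \<rho> s > 0" for t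
      using local[of t] that nc by (auto simp: nocap_def)
  qed
  define Tst where "Tst = 2 * (1 + 1 / \<nu>) * RC * ln (RC / \<delta>)"
  define Tb where "Tb = t0 + Tst"
  have RC0: "RC > 0" using RCgt delta_pos by simp
  have lnpos: "ln (RC / \<delta>) > 0" using RCgt delta_pos by simp
  have Tst0: "Tst > 0"
  proof -
    have "2 * (1 + 1 / \<nu>) > 0" using nu_pos by (simp add: add_pos_pos)
    then show ?thesis unfolding Tst_def using lnpos RC0 by (intro mult_pos_pos) auto
  qed
  have kT: "k * Tst = 2 * ln (RC / \<delta>)"
  proof -
    have e: "1 + 1 / \<nu> = (1 + \<nu>) / \<nu>" using nu_pos by (simp add: field_simps)
    have "k * Tst = (\<nu> * (1 + \<nu>) * RC) / (\<nu> * (1 + \<nu>) * RC) * (2 * ln (RC / \<delta>))"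
      unfolding k_def Tst_def e by (simp add: field_simps)
    also have "\<dots> = 2 * ln (RC / \<delta>)" using nu_pos RC0 by simp
    finally show ?thesis .
  qed
  have hTb: "h Tb = RC^2"
  proof -
    have "exp (k * (Tb - t0)) = exp (ln ((RC / \<delta>)^2))"
      by (simp add: Tb_def kT ln_realpow)
    also have "\<dots> = (RC / \<delta>)^2" using RC0 delta_pos by simp
    finally show ?thesis using delta_pos by (simp add: h_def power_divide)
  qed
  have capt: "\<not> nocap Tb"
  proof
    assume nc: "nocap Tb"
    have tb: "t0 \<le> Tb" using Tst0 by (simp add: Tb_def)
    have I: "g Tb \<ge> h Tb" "\<rho> Tb > 0" using invariant[OF tb nc] tb by auto
    have rne: "xE Tb \<noteq> xP Tb" using ncD[OF nc tb] by simp
    have "\<rho> Tb < RC" using basic[OF I rne] by simp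
    then have "(\<rho> Tb)^2 < RC^2" using I(2) by (simp add: power_strict_mono)
    moreover have "g Tb \<le> (\<rho> Tb)^2" by (simp add: g_eq)
    ultimately show False using I(1) hTb by linarith
  qed
  define S where "S = {s\<in>{t0..Tb}. xP s = xE s}"
  obtain w where wS: "w \<in> S" using capt by (auto simp: nocap_def S_def)
  have Sne: "S \<noteq> {}" using wS by auto
  have bddS: "bdd_below S" by (auto simp: S_def bdd_below_def)
  define tc where "tc = Inf S"
  have tc1: "t0 \<le> tc" unfolding tc_def by (rule cInf_greatest[OF Sne]) (auto simp: S_def)
  have tc2: "tc \<le> Tb" unfolding tc_def using cInf_lower[OF wS bddS] wS by (auto simp: S_def)
  have before: "xP s \<noteq> xE s" if "s \<in> {t0..<tc}" for s
  proof
    assume "xP s = xE s"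
    then have "s \<in> S" using that tc2 by (auto simp: S_def)
    then have "tc \<le> s" unfolding tc_def using bddS by (rule cInf_lower)
    then show False using that by simp
  qed
  have captc: "xP tc = xE tc"
  proof (rule ccontr)
    assume ne: "xP tc \<noteq> xE tc"
    have nc: "nocap tc" unfolding nocap_def
    proof
      fix s assume s: "s \<in> {t0..tc}"
      show "xP s \<noteq> xE s"
      proof (cases "s = tc")
        case True then show ?thesis using ne by simp
      next
        case False then show ?thesis using before[of s] s by simp
      qed
    qed
    have cP: "continuous (at tc within {t0..}) xP"
      using pursuer[of tc] nc tc1 by (intro has_vector_derivative_continuous) (auto simp: nocap_def)
    have cE: "continuous (at tc within {t0..}) xE"
      using contE tc1 by (simp add: continuous_on_eq_continuous_within)
    have c: "continuous (at tc within {t0..}) (\<lambda>s. xP s - xE s)" using cP cE by (rule continuous_diff)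
    have npos: "norm (xP tc - xE tc) > 0" using ne by simp
    obtain d where d: "d > 0" and D: "\<And>x'. x' \<in> {t0..} \<Longrightarrow> dist x' tc < d \<Longrightarrow>
        dist (xP x' - xE x') (xP tc - xE tc) < norm (xP tc - xE tc)"
      using c npos unfolding continuous_within_eps_delta by blast
    have "Inf S < tc + d" using d by (simp add: tc_def)
    then obtain s where sS: "s \<in> S" and sl: "s < tc + d" using cInf_lessD[OF Sne] by blast
    have "tc \<le> s" unfolding tc_def using sS bddS by (rule cInf_lower)
    then have "dist (xP s - xE s) (xP tc - xE tc) < norm (xP tc - xE tc)"
      using D[of s] sS sl by (auto simp: S_def dist_real_def)
    moreover have "xP s = xE s" using sS by (simp add: S_def)
    ultimately show False by (simp add: dist_norm norm_minus_commute)
  qed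
  have tcgt: "t0 < tc" using tc1 captc init_distinct by (cases "tc = t0") auto
  have inv_at: "g t \<ge> h t \<and> \<rho> t > 0 \<and> xE t \<noteq> xP t" if "t \<in> {t0..<tc}" for t
  proof -
    have nc: "nocap t" using before that by (auto simp: nocap_def)
    then show ?thesis using invariant[of t] ncD[OF nc, of t] that by auto
  qed
  have P4: "\<forall>t\<in>{t0..<tc}. xP t \<noteq> xE t \<and> pursuer_z \<nu> \<delta> (xE t0) (xP t0) (xE t) (xP t) \<noteq> 0"
  proof
    fix t assume t: "t \<in> {t0..<tc}"
    have I: "g t \<ge> h t" "\<rho> t > 0" "xE t \<noteq> xP t" using inv_at[OF t] by auto
    have bas: "norm (Yv t) < \<rho> t" "\<rho> t < RC" using basic[OF I] by auto
    have nu1: "norm (sgn (xE t - xP t)) = 1" using I(3) by (simp add: norm_sgn)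
    show "xP t \<noteq> xE t \<and> pursuer_z \<nu> \<delta> (xE t0) (xP t0) (xE t) (xP t) \<noteq> 0"
      using key_alg(1)[OF nu_pos nu_lt1 nu1 I(2) bas(2) bas(1)] I(3) by (simp add: zP)
  qed
  have P5: "\<forall>t\<in>{t0<..<tc}. cball (apo_center \<nu> (xE t) (xP t)) (apo_radius \<nu> (xE t) (xP t))
            \<subseteq> interior (cball xC RC)"
  proof (intro ballI subsetI)
    fix t x assume t: "t \<in> {t0<..<tc}" and x: "x \<in> cball (apo_center \<nu> (xE t) (xP t)) (apo_radius \<nu> (xE t) (xP t))"
    have I: "g t \<ge> h t" "\<rho> t > 0" "xE t \<noteq> xP t" using inv_at[of t] t by auto
    have bas: "norm (Yv t) < \<rho> t" using basic[OF I] by auto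
    have "dist xC x \<le> dist xC (apo_center \<nu> (xE t) (xP t)) + dist (apo_center \<nu> (xE t) (xP t)) x"
      by (rule dist_triangle)
    also have "dist xC (apo_center \<nu> (xE t) (xP t)) = norm (Yv t)"
      using cen[of t] by (metis dist_commute dist_norm)
    also have "dist (apo_center \<nu> (xE t) (xP t)) x \<le> \<gamma> * norm (xE t - xP t)" using x by (simp add: rad)
    finally have "dist xC x < RC" using bas by (simp add: \<rho>_def)
    then show "x \<in> interior (cball xC RC)" by simp
  qed
  have tcb: "tc \<le> t0 + 2 * (1 + 1 / \<nu>) * RC * ln (RC / \<delta>)" using tc2 by (simp add: Tb_def Tst_def)
  show ?thesis
    using tcgt tcb captc P4 P5 unfolding RC_def xC_def by blast
qed

end
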